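(* For every pair of integers $k \geqslant 2$ and $\ell \geqslant 0$ there exists a direction-determinate 2DFA with set of states $Q = Q^+ \cup Q^-$, where $|Q^+| = k$ and $|Q^-| = \ell$, which accepts at least one string and whose shortest accepted string has length exactly $\binom{k+\ell}{\ell+1} - 1$.
   Context: A two-way deterministic finite automaton (2DFA) is a quintuple $(\Sigma, Q, q_0, \delta, F)$ where $\Sigma$ is a finite alphabet not containing the end-markers $\vdash$ and $\dashv$, $Q$ is a finite set of states, $q_0 \in Q$ is the initial state, $\delta: Q \times (\Sigma \cup \{\vdash, \dashv\}) \to Q \times \{-1,+1\}$ is a partial transition function, and $F \subseteq Q$ is the set of accepting states. On input $w = a_1 \cdots a_m \in \Sigma^*$ the automaton works on the tape $\vdash a_1 \cdots a_m \dashv$, starting at $\vdash$ in state $q_0$; in state $q$ reading symbol $c$, if $\delta(q,c) = (r,d)$ it enters state $r$ and moves one cell in direction $d$ ($-1$ left, $+1$ right); if $\delta(q,c)$ is undefined it rejects. It accepts $w$ if it ever arrives at $\dashv$ in a state from $F$; it may also loop forever (not accepting). The number of states of the automaton is $|Q|$. A 2DFA is direction-determinate if there is a partition $Q = Q^+ \cup Q^-$, $Q^+ \cap Q^- = \emptyset$, such that every transition $\delta(q,c) = (r,+1)$ has $r \in Q^+$ and every transition $\delta(q,c) = (r,-1)$ has $r \in Q^-$. *)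

theory Defs
  imports Main
begin

datatype 'a tsym = LEnd | REnd | Sym 'a

record tdfa =
  alph   :: "nat set"
  states :: "nat set"
  init   :: nat
  trans  :: "nat \<Rightarrow> nat tsym \<Rightarrow> (nat \<times> int) option"
  final  :: "nat set"

definition tape_syms :: "tdfa \<Rightarrow> nat tsym set" where
  "tape_syms A = {LEnd, REnd} \<union> Sym ` alph A"

definition wf_tdfa :: "tdfa \<Rightarrow> bool" where
  "wf_tdfa A \<longleftrightarrow> finite (alph A) \<and> finite (states A) \<and> init A \<in> states A
     \<and> final A \<subseteq> states A
     \<and> (\<forall>q c r d. trans A q c = Some (r, d) \<longrightarrow>
            q \<in> states A \<and> c \<in> tape_syms A \<and> r \<in> states A \<and> d \<in> {-1, 1})"

definition tape :: "nat list \<Rightarrow> nat \<Rightarrow> nat tsym" where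
  "tape w i = (if i = 0 then LEnd else if i = Suc (length w) then REnd else Sym (w ! (i - 1)))"

text \<open>One computation step on input w between configurations (state, head position).
  A move off the tape is not a step (the run stops, rejecting).\<close>
definition step :: "tdfa \<Rightarrow> nat list \<Rightarrow> nat \<times> nat \<Rightarrow> nat \<times> nat \<Rightarrow> bool" where
  "step A w c c' \<longleftrightarrow> (\<exists>q i r d. c = (q, i) \<and> i \<le> Suc (length w)
      \<and> trans A q (tape w i) = Some (r, d)
      \<and> 0 \<le> int i + d \<and> int i + d \<le> int (Suc (length w))
      \<and> c' = (r, nat (int i + d)))"

definition accepts :: "tdfa \<Rightarrow> nat list \<Rightarrow> bool" where
  "accepts A w \<longleftrightarrow> w \<in> lists (alph A) \<and>
     (\<exists>q. q \<in> final A \<and> (step A w)\<^sup>*\<^sup>* (init A, 0) (q, Suc (length w)))"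

definition direction_determinate_wrt :: "tdfa \<Rightarrow> nat set \<Rightarrow> nat set \<Rightarrow> bool" where
  "direction_determinate_wrt A Qp Qm \<longleftrightarrow> Qp \<union> Qm = states A \<and> Qp \<inter> Qm = {}
     \<and> (\<forall>q c r. trans A q c = Some (r, 1) \<longrightarrow> r \<in> Qp)
     \<and> (\<forall>q c r. trans A q c = Some (r, -1) \<longrightarrow> r \<in> Qm)"

end

theory Submission
  imports Defs "HOL-Library.List_Lexorder"
begin


fun pl :: "nat list \<Rightarrow> nat \<Rightarrow> nat option" where
  "pl (x # y # r) s = (if s = x then Some y else pl r s)"
| "pl _ s = None"

fun lf :: "nat set \<Rightarrow> nat list \<Rightarrow> nat list" where
  "lf P [a] = (if a \<in> P then [a] else [])"
| "lf P (a # b # r) = (if a \<in> P then a # b # lf P r else lf P r)"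
| "lf P [] = []"

fun rf :: "nat set \<Rightarrow> nat list \<Rightarrow> nat list" where
  "rf Q (b # a # r) = (if b \<in> Q then b # a # rf Q r else rf Q r)"
| "rf Q _ = []"

lemma pl_set: "pl u s = Some b \<Longrightarrow> s \<in> set u \<and> b \<in> set u"
  by (induction u s rule: pl.induct) (auto split: if_splits)

lemma lf_sub: "set (lf P u) \<subseteq> set u"
  by (induction P u rule: lf.induct) auto

lemma rf_sub: "set (rf Q u) \<subseteq> set u"
  by (induction Q u rule: rf.induct) auto

locale cw = fixes k l :: nat
begin

fun canon :: "nat list \<Rightarrow> bool" where
  "canon [a] = (a < k)"
| "canon (a # b # c # rest) = (a < k \<and> k \<le> b \<and> b < k + l \<and> a < c \<and> canon (c # rest)
      \<and> (case rest of [] \<Rightarrow> True | b' # _ \<Rightarrow> b' < b))"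
| "canon _ = False"

lemma canon_set: "canon w \<Longrightarrow> set w \<subseteq> {..<k+l}"
  by (induction w rule: canon.induct) auto

lemma canon_ne: "canon w \<Longrightarrow> w \<noteq> []"
  by auto

lemma canon_hd: "canon w \<Longrightarrow> hd w < k \<and> (\<forall>x\<in>set w. x < k \<longrightarrow> hd w \<le> x)"
proof (induction w rule: canon.induct)
  case (2 a b c rest)
  then have "a < k" "a < c" "k \<le> b" "canon (c # rest)" by auto
  with 2 show ?case by fastforce
qed auto

lemma canon_qbound: "canon w \<Longrightarrow> (case tl w of [] \<Rightarrow> True | b' # _ \<Rightarrow> b' < B) \<Longrightarrow> \<forall>x\<in>set w. k \<le> x \<longrightarrow> x < B"
proof (induction w rule: canon.induct)
  case (2 a b c rest)
  then show ?case by (cases rest) auto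
qed auto

lemma canon_tail_q: "canon (a # b # rest) \<Longrightarrow> \<forall>x\<in>set rest. k \<le> x \<longrightarrow> x < b"
proof (cases rest)
  case (Cons c r)
  assume h: "canon (a # b # rest)"
  then have "canon (c # r)" "(case r of [] \<Rightarrow> True | b' # _ \<Rightarrow> b' < b)" using Cons by auto
  then show ?thesis using canon_qbound[of "c # r" b] Cons by auto
qed simp

lemma canon_distinct: "canon w \<Longrightarrow> distinct w"
proof (induction w rule: canon.induct)
  case (2 a b c rest)
  from "2.prems" have cr: "canon (c # rest)" and ac: "a < c" and ak: "a < k" and kb: "k \<le> b" by auto
  have h: "\<forall>x\<in>set (c#rest). x < k \<longrightarrow> c \<le> x" using canon_hd[OF cr] by simp
  have q: "\<forall>x\<in>set (c#rest). k \<le> x \<longrightarrow> x < b"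
    using canon_tail_q[OF "2.prems"] kb ac ak by auto
  have "a \<notin> set (c#rest)" using h ac ak by fastforce
  moreover have "b \<notin> set (c#rest)" using q kb by fastforce
  moreover have "a \<noteq> b" using ak kb by simp
  ultimately show ?case using "2.IH" cr by auto
qed auto


lemma canon_unique: "canon w1 \<Longrightarrow> canon w2 \<Longrightarrow> set w1 = set w2 \<Longrightarrow> w1 = w2"
proof (induction w1 arbitrary: w2 rule: canon.induct)
  case (1 a)
  show ?case
  proof (cases w2 rule: canon.cases)
    case (2 x y z r)
    then have "y \<in> set w2" "k \<le> y" using "1.prems" by auto
    moreover have "y = a" using calculation "1.prems"(3) by (metis empty_iff insert_iff list.set(1) list.set(2))
    ultimately show ?thesis using "1.prems" by auto
  qed (use 1 in auto)
next
  case (2 a b c rest)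
  have w1: "canon (a # b # c # rest)" by fact
  from w1 have ak: "a < k" and kb: "k \<le> b" and cr: "canon (c # rest)" by auto
  have d1: "distinct (a # b # c # rest)" using canon_distinct[OF w1] .
  show ?case
  proof (cases w2 rule: canon.cases)
    case (1 x)
    then show ?thesis using "2.prems" kb by auto
  next
    case (2 x y z r)
    have w2: "canon w2" by fact
    from w2 2 have xk: "x < k" and ky: "k \<le> y" and zr: "canon (z # r)" by auto
    have d2: "distinct (x # y # z # r)" using canon_distinct[OF w2] 2 by simp
    have st: "set (a # b # c # rest) = set (x # y # z # r)" using "2.prems" 2 by simp
    have ax: "a = x"
    proof -
      have "a \<le> x" using canon_hd[OF w1] st xk by auto
      moreover have "x \<le> a" using canon_hd[OF w2] st ak 2 by auto
      ultimately show ?thesis by simp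
    qed
    have qb1: "\<forall>t\<in>set rest. k \<le> t \<longrightarrow> t < b" using canon_tail_q[OF w1] by simp
    have qb2: "\<forall>t\<in>set r. k \<le> t \<longrightarrow> t < y" using canon_tail_q[of x y "z # r"] w2 2 by auto
    have ck: "c < k" using canon_hd[OF cr] by simp
    have zk: "z < k" using canon_hd[OF zr] by simp
    have by': "b = y"
    proof (rule ccontr)
      assume ne: "b \<noteq> y"
      have "y \<in> set (a # b # c # rest)" using st by simp
      then have "y \<in> set rest" using ne ax xk ky ck by auto
      then have "y < b" using qb1 ky by auto
      moreover have "b \<in> set (x # y # z # r)" using st by (metis list.set_intros(1) list.set_intros(2))
      then have "b \<in> set r" using ne ax ak kb zk by auto
      then have "b < y" using qb2 kb by auto
      ultimately show False by simp
    qed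
    have "set (c # rest) = set (z # r)"
    proof -
      have "set (c # rest) = set (a # b # c # rest) - {a, b}" using d1 by auto
      also have "\<dots> = set (x # y # z # r) - {x, y}" using st ax by' by simp
      also have "\<dots> = set (z # r)" using d2 by auto
      finally show ?thesis .
    qed
    then have "c # rest = z # r" using "2.IH"[OF cr zr] by simp
    then show ?thesis using 2 ax by' by simp
  qed (use "2.prems" in auto)
qed auto

lemma canon_card: "canon w \<Longrightarrow> card (set w \<inter> {..<k}) = card (set w \<inter> {k..}) + 1"
proof (induction w rule: canon.induct)
  case (1 a)
  then have "set [a] \<inter> {..<k} = {a}" "set [a] \<inter> {k..} = {}" by auto
  then show ?case by simp
next
  case (2 a b c rest)
  have w: "canon (a # b # c # rest)" by fact
  then have ak: "a < k" and kb: "k \<le> b" and cr: "canon (c # rest)" by auto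
  have d: "distinct (a # b # c # rest)" using canon_distinct[OF w] .
  let ?S = "set (c # rest)"
  have e1: "set (a # b # c # rest) \<inter> {..<k} = insert a (?S \<inter> {..<k})" using ak kb by auto
  have e2: "set (a # b # c # rest) \<inter> {k..} = insert b (?S \<inter> {k..})" using ak kb by auto
  have "a \<notin> ?S \<inter> {..<k}" "b \<notin> ?S \<inter> {k..}" using d by auto
  then show ?case using e1 e2 "2.IH"[OF cr] by simp
qed auto


lemma pl_L: "canon u \<Longrightarrow> pl u s = Some b \<Longrightarrow> s < k \<and> s \<in> set u \<and> s \<noteq> last u \<and> k \<le> b \<and> b \<in> set u"
proof (induction u rule: canon.induct)
  case (2 a b' c rest)
  have w: "canon (a # b' # c # rest)" by fact
  then have cr: "canon (c # rest)" and ak: "a < k" and kb: "k \<le> b'" by auto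
  have d: "distinct (a # b' # c # rest)" using canon_distinct[OF w] .
  show ?case
  proof (cases "s = a")
    case True
    then have "b = b'" using "2.prems" by simp
    moreover have "last (a # b' # c # rest) \<in> set (c # rest)" by simp
    ultimately show ?thesis using True ak kb d by (metis distinct.simps(2) last_ConsR list.discI list.set_intros(1) list.set_intros(2) list.simps(15))
  next
    case False
    then have "pl (c # rest) s = Some b" using "2.prems" by simp
    then show ?thesis using "2.IH"[OF cr] by auto
  qed
qed auto

lemma pl_L_ex: "canon u \<Longrightarrow> s \<in> set u \<Longrightarrow> s < k \<Longrightarrow> s \<noteq> last u \<Longrightarrow> \<exists>b. pl u s = Some b"
proof (induction u rule: canon.induct)
  case (2 a b' c rest)
  then have cr: "canon (c # rest)" and kb: "k \<le> b'" by auto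
  show ?case
  proof (cases "s = a")
    case False
    then have "s \<in> set (c # rest)" using "2.prems" kb by auto
    then show ?thesis using "2.IH"[OF cr] "2.prems" False by auto
  qed simp
qed auto

lemma pl_L_inj: "canon u \<Longrightarrow> pl u s1 = Some b \<Longrightarrow> pl u s2 = Some b \<Longrightarrow> s1 = s2"
proof (induction u rule: canon.induct)
  case (2 a b' c rest)
  have w: "canon (a # b' # c # rest)" by fact
  then have cr: "canon (c # rest)" by auto
  have d: "distinct (a # b' # c # rest)" using canon_distinct[OF w] .
  show ?case
  proof (cases "s1 = a"; cases "s2 = a")
    assume "s1 = a" "s2 \<noteq> a"
    then have "b = b'" "pl (c # rest) s2 = Some b" using "2.prems" by auto
    then show ?thesis using pl_set d by fastforce
  next
    assume "s1 \<noteq> a" "s2 = a"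
    then have "b = b'" "pl (c # rest) s1 = Some b" using "2.prems" by auto
    then show ?thesis using pl_set d by fastforce
  next
    assume "s1 \<noteq> a" "s2 \<noteq> a"
    then show ?thesis using "2.prems" "2.IH"[OF cr] by simp
  qed simp
qed auto

lemma pl_R: "canon u \<Longrightarrow> pl (tl u) s = Some a \<Longrightarrow> k \<le> s \<and> s \<in> set u \<and> a < k \<and> a \<in> set u \<and> a \<noteq> hd u"
proof (induction u rule: canon.induct)
  case (2 x b c rest)
  have w: "canon (x # b # c # rest)" by fact
  then have cr: "canon (c # rest)" and xk: "x < k" and kb: "k \<le> b" by auto
  have d: "distinct (x # b # c # rest)" using canon_distinct[OF w] .
  have ck: "c < k" using canon_hd[OF cr] by simp
  show ?case
  proof (cases "s = b")
    case True
    then show ?thesis using "2.prems" kb ck d by auto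
  next
    case False
    then have "pl (tl (c # rest)) s = Some a" using "2.prems" by simp
    then show ?thesis using "2.IH"[OF cr] d by auto
  qed
qed auto

lemma pl_R_ex: "canon u \<Longrightarrow> s \<in> set u \<Longrightarrow> k \<le> s \<Longrightarrow> \<exists>a. pl (tl u) s = Some a"
proof (induction u rule: canon.induct)
  case (2 x b c rest)
  then have cr: "canon (c # rest)" and xk: "x < k" by auto
  show ?case
  proof (cases "s = b")
    case False
    then have "s \<in> set (c # rest)" using "2.prems" xk by auto
    then show ?thesis using "2.IH"[OF cr] "2.prems" False by auto
  qed simp
qed auto

lemma pl_R_inj: "canon u \<Longrightarrow> pl (tl u) s1 = Some a \<Longrightarrow> pl (tl u) s2 = Some a \<Longrightarrow> s1 = s2"
proof (induction u rule: canon.induct)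
  case (2 x b c rest)
  have w: "canon (x # b # c # rest)" by fact
  then have cr: "canon (c # rest)" by auto
  have d: "distinct (x # b # c # rest)" using canon_distinct[OF w] .
  have "\<And>s. pl rest s = Some a \<Longrightarrow> a \<noteq> c"
    using pl_set d by fastforce
  then show ?case
    using "2.prems" "2.IH"[OF cr] by (auto split: if_splits)
qed auto


lemma lf_set: "canon u \<Longrightarrow> set (lf P u) = {a \<in> set u. a < k \<and> a \<in> P} \<union> {b. \<exists>a\<in>P. pl u a = Some b}"
proof (induction u rule: canon.induct)
  case (1 a)
  then show ?case by auto
next
  case (2 a b c rest)
  have w: "canon (a # b # c # rest)" by fact
  then have cr: "canon (c # rest)" and ak: "a < k" and kb: "k \<le> b" by auto
  have d: "distinct (a # b # c # rest)" using canon_distinct[OF w] .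
  have na: "pl (c # rest) a = None"
    using pl_set d by (metis distinct.simps(2) list.set_intros(2) option.exhaust)
  have e: "{b'. \<exists>a'\<in>P. pl (a # b # c # rest) a' = Some b'} =
        (if a \<in> P then {b} else {}) \<union> {b'. \<exists>a'\<in>P. pl (c # rest) a' = Some b'}"
    using na by (auto split: if_splits) (metis na option.distinct(1))
  show ?case using "2.IH"[OF cr] e ak kb by auto
qed auto

lemma lf_distinct: "distinct u \<Longrightarrow> distinct (lf P u)"
  by (induction P u rule: lf.induct) (use lf_sub in fastforce)+

lemma lf_count: "canon u \<Longrightarrow> length (filter (\<lambda>x. x < k) (lf P u)) =
    length (filter (\<lambda>x. \<not> x < k) (lf P u)) + (if last u \<in> P then 1 else 0)"
  by (induction u rule: canon.induct) auto

lemma canon_le_hd: "canon (c # rest) \<Longrightarrow> x \<in> set (c # rest) \<Longrightarrow> x < k \<Longrightarrow> c \<le> x"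
  using canon_hd by fastforce

lemma canon_snd_q: "canon (h # b' # t) \<Longrightarrow> k \<le> b'"
  by (cases t) auto

lemma lf_canon: "canon u \<Longrightarrow> last u \<in> P \<Longrightarrow> canon (lf P u) \<and> u \<le> lf P u"
proof (induction u rule: canon.induct)
  case (1 a)
  then show ?case by simp
next
  case (2 a b c rest)
  have w: "canon (a # b # c # rest)" by fact
  then have cr: "canon (c # rest)" and ak: "a < k" and kb: "k \<le> b" and bl: "b < k + l"
    and ac: "a < c" by auto
  have lp: "last (c # rest) \<in> P" using "2.prems" by simp
  define L where "L = lf P (c # rest)"
  have IH: "canon L" "c # rest \<le> L" using "2.IH"[OF cr lp] L_def by auto
  obtain h t where Lht: "L = h # t" using IH(1) by (cases L) auto
  have hs: "h \<in> set (c # rest)"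
  proof -
    have "h \<in> set L" using Lht by simp
    then show ?thesis using lf_sub[of P "c # rest"] unfolding L_def by blast
  qed
  have hk: "h < k" using canon_hd[OF IH(1)] Lht by simp
  have ch: "c \<le> h" using canon_le_hd[OF cr hs hk] .
  show ?case
  proof (cases "a \<in> P")
    case True
    then have e: "lf P (a # b # c # rest) = a # b # h # t" using L_def Lht by simp
    have tc: "(case t of [] \<Rightarrow> True | b' # _ \<Rightarrow> b' < b)"
    proof (cases t)
      case (Cons b' t')
      have "k \<le> b'" using canon_snd_q IH(1) Lht Cons by simp
      moreover have "b' \<in> set (c # rest)"
      proof -
        have "b' \<in> set L" using Lht Cons by simp
        then show ?thesis using lf_sub[of P "c # rest"] unfolding L_def by blast
      qed
      ultimately have "b' \<in> set rest" using canon_hd[OF cr] by auto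
      then have "b' < b" using canon_tail_q[OF w] \<open>k \<le> b'\<close> by simp
      then show ?thesis using Cons by simp
    qed simp
    have "canon (a # b # h # t)" using ak kb bl ac ch IH(1) Lht tc by simp
    moreover have "a # b # c # rest \<le> a # b # h # t" using IH(2) Lht by simp
    ultimately show ?thesis using e by simp
  next
    case False
    then have e: "lf P (a # b # c # rest) = h # t" using L_def Lht by simp
    have "a < h" using ac ch by simp
    then show ?thesis using e IH(1) Lht by simp
  qed
qed auto

lemma canon_replace_hd: "canon (c # X) \<Longrightarrow> a < c \<Longrightarrow> canon (a # X)"
proof (cases X)
  case (Cons b' t)
  assume h: "canon (c # X)" "a < c"
  then show ?thesis using Cons h by (cases t) auto
qed simp

lemma rf_set: "canon u \<Longrightarrow> set (hd u # rf Q (tl u)) = {hd u} \<union> {b \<in> set u. k \<le> b \<and> b \<in> Q} \<union> {a. \<exists>b\<in>Q. pl (tl u) b = Some a}"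
proof (induction u rule: canon.induct)
  case (1 a)
  then show ?case by auto
next
  case (2 a b c rest)
  have w: "canon (a # b # c # rest)" by fact
  then have cr: "canon (c # rest)" and ak: "a < k" and kb: "k \<le> b" by auto
  have d: "distinct (a # b # c # rest)" using canon_distinct[OF w] .
  have ck: "c < k" using canon_hd[OF cr] by simp
  have nb: "pl rest b = None"
    using pl_set d by (metis distinct.simps(2) list.set_intros(2) option.exhaust)
  have IH: "set (c # rf Q rest) = {c} \<union> {b' \<in> set (c # rest). k \<le> b' \<and> b' \<in> Q} \<union> {a'. \<exists>b'\<in>Q. pl rest b' = Some a'}"
    using "2.IH"[OF cr] by simp
  have e: "{a'. \<exists>b'\<in>Q. pl (b # c # rest) b' = Some a'} = (if b \<in> Q then {c} else {}) \<union> {a'. \<exists>b'\<in>Q. pl rest b' = Some a'}"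
    using nb by (auto split: if_splits) (metis nb option.distinct(1))
  show ?case
  proof (cases "b \<in> Q")
    case True
    then show ?thesis using IH e ck kb by auto
  next
    case False
    have "set (a # rf Q (b # c # rest)) = {a} \<union> set (rf Q rest)" using False by simp
    also have "set (rf Q rest) = {b' \<in> set (c # rest). k \<le> b' \<and> b' \<in> Q} \<union> {a'. \<exists>b'\<in>Q. pl rest b' = Some a'}"
    proof -
      have "c \<notin> set (rf Q rest)" using rf_sub d by fastforce
      moreover have "c \<notin> {a'. \<exists>b'\<in>Q. pl rest b' = Some a'}"
        using pl_set d by fastforce
      moreover have "c \<notin> {b' \<in> set (c # rest). k \<le> b' \<and> b' \<in> Q}" using ck by auto
      moreover have "insert c (set (rf Q rest)) = insert c ({b' \<in> set (c # rest). k \<le> b' \<and> b' \<in> Q} \<union> {a'. \<exists>b'\<in>Q. pl rest b' = Some a'})"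
        using IH by simp
      ultimately show ?thesis by (metis (no_types, lifting) Un_iff insert_ident)
    qed
    finally show ?thesis using e False ak kb by auto
  qed
qed auto

lemma rf_canon: "canon u \<Longrightarrow> canon (hd u # rf Q (tl u)) \<and> hd u # rf Q (tl u) \<le> u"
proof (induction u rule: canon.induct)
  case (1 a)
  then show ?case by simp
next
  case (2 a b c rest)
  have w: "canon (a # b # c # rest)" by fact
  then have cr: "canon (c # rest)" and ak: "a < k" and kb: "k \<le> b" and bl: "b < k + l"
    and ac: "a < c" by auto
  define X where "X = rf Q rest"
  have IH: "canon (c # X)" "c # X \<le> c # rest" using "2.IH"[OF cr] X_def by auto
  show ?case
  proof (cases "b \<in> Q")
    case True
    then have e: "hd (a # b # c # rest) # rf Q (tl (a # b # c # rest)) = a # b # c # X" using X_def by simp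
    have tc: "(case X of [] \<Rightarrow> True | b' # _ \<Rightarrow> b' < b)"
    proof (cases X)
      case (Cons b' t')
      have "k \<le> b'" using canon_snd_q IH(1) Cons by simp
      moreover have "b' \<in> set rest"
      proof -
        have "b' \<in> set X" using Cons by simp
        then show ?thesis using rf_sub[of Q rest] unfolding X_def by blast
      qed
      ultimately have "b' < b" using canon_tail_q[OF w] by simp
      then show ?thesis using Cons by simp
    qed simp
    have "canon (a # b # c # X)" using ak kb bl ac IH(1) tc by simp
    then show ?thesis using e IH(2) by simp
  next
    case False
    then have e: "hd (a # b # c # rest) # rf Q (tl (a # b # c # rest)) = a # X" using X_def by simp
    have "canon (a # X)" using canon_replace_hd[OF IH(1) ac] .
    moreover have "a # X \<le> a # b # c # rest"
    proof (cases X)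
      case (Cons b' t')
      have "k \<le> b'" using canon_snd_q IH(1) Cons by simp
      moreover have "b' \<in> set rest"
      proof -
        have "b' \<in> set X" using Cons by simp
        then show ?thesis using rf_sub[of Q rest] unfolding X_def by blast
      qed
      ultimately have "b' < b" using canon_tail_q[OF w] by simp
      then show ?thesis using Cons by simp
    qed simp
    ultimately show ?thesis using e by simp
  qed
qed auto


lemma canon_exists:
  "finite B \<Longrightarrow> A \<subseteq> {..<k} \<Longrightarrow> B \<subseteq> {k..<k+l} \<Longrightarrow> card A = card B + 1 \<Longrightarrow> \<exists>w. canon w \<and> set w = A \<union> B"
proof (induction "card B" arbitrary: A B)
  case 0
  then have B0: "B = {}" by simp
  have "card A = 1" using "0.prems"(4) "0.hyps" by simp
  then obtain a where "A = {a}" using card_1_singletonE by blast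
  then show ?case using B0 "0.prems" by (intro exI[of _ "[a]"]) auto
next
  case (Suc n)
  have fB: "finite B" by fact
  have Bne: "B \<noteq> {}" using Suc.hyps(2) by auto
  have fA: "finite A" using Suc.prems(4) Suc.hyps(2) card.infinite by fastforce
  have Ane: "A \<noteq> {}" using Suc.prems(4) by auto
  define b where "b = Max B"
  define a where "a = Min A"
  have bB: "b \<in> B" using Max_in[OF fB Bne] b_def by simp
  have aA: "a \<in> A" using Min_in[OF fA Ane] a_def by simp
  define A' where "A' = A - {a}"
  define B' where "B' = B - {b}"
  have cB': "n = card B'" using Suc.hyps(2) bB B'_def fB by simp
  have cA': "card A' = card B' + 1" using Suc.prems(4) Suc.hyps(2) aA A'_def fA cB' by simp
  obtain w' where w': "canon w'" "set w' = A' \<union> B'"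
    using Suc.hyps(1)[OF cB'] fB Suc.prems A'_def B'_def cA' by (meson Diff_subset finite_Diff subset_trans)
  obtain c rest where cr: "w' = c # rest" using w'(1) by (cases w') auto
  have ck: "c < k" using canon_hd[OF w'(1)] cr by simp
  have cA: "c \<in> A'" using w'(2) cr ck Suc.prems(3) B'_def by auto
  have ac: "a < c"
  proof -
    have "a \<le> c" using cA A'_def a_def fA by simp
    moreover have "c \<noteq> a" using cA A'_def by simp
    ultimately show ?thesis by simp
  qed
  have ak: "a < k" using aA Suc.prems(2) by auto
  have kb: "k \<le> b" "b < k + l" using bB Suc.prems(3) by auto
  have tc: "(case rest of [] \<Rightarrow> True | b' # _ \<Rightarrow> b' < b)"
  proof (cases rest)
    case (Cons b' t)
    have kb': "k \<le> b'" using canon_snd_q w'(1) cr Cons by simp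
    have "b' \<in> set w'" using cr Cons by simp
    then have "b' \<in> A' \<union> B'" using w'(2) by blast
    then have "b' \<in> B'" using kb' Suc.prems(2) A'_def by auto
    then have "b' \<le> b" "b' \<noteq> b" using B'_def b_def fB by auto
    then show ?thesis using Cons by simp
  qed simp
  have "canon (a # b # c # rest)" using ak kb ac w'(1) cr tc by simp
  moreover have "set (a # b # c # rest) = A \<union> B" using w'(2) cr aA bB A'_def B'_def by auto
  ultimately show ?case by blast
qed

definition F :: "nat list \<Rightarrow> nat set" where
  "F w = (set w \<inter> {..<k}) \<union> ({k..<k+l} - set w)"

lemma F_inv: "canon w \<Longrightarrow> set w = (F w \<inter> {..<k}) \<union> ({k..<k+l} - F w)"
  using canon_set[of w] unfolding F_def by auto

lemma card_canon: "card {w. canon w} = (k + l) choose (l + 1)"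
proof -
  have inj: "inj_on F {w. canon w}"
  proof (rule inj_onI)
    fix w1 w2 assume "w1 \<in> {w. canon w}" "w2 \<in> {w. canon w}" "F w1 = F w2"
    then show "w1 = w2" using F_inv canon_unique by (metis mem_Collect_eq)
  qed
  have img: "F ` {w. canon w} = {S. S \<subseteq> {..<k+l} \<and> card S = l + 1}"
  proof
    show "F ` {w. canon w} \<subseteq> {S. S \<subseteq> {..<k+l} \<and> card S = l + 1}"
    proof
      fix S assume "S \<in> F ` {w. canon w}"
      then obtain w where w: "canon w" "S = F w" by auto
      have sub: "S \<subseteq> {..<k+l}" using w unfolding F_def by auto
      have e1: "set w \<inter> {k..} = set w \<inter> {k..<k+l}" using canon_set[OF w(1)] by auto
      have c1: "card ({k..<k+l} - set w) = l - card (set w \<inter> {k..<k+l})"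
        using card_Diff_subset_Int[of "{k..<k+l}" "set w"] by (simp add: Int_commute)
      have c2: "card (set w \<inter> {k..<k+l}) \<le> l"
        using card_mono[of "{k..<k+l}" "set w \<inter> {k..<k+l}"] by simp
      have "card S = card (set w \<inter> {..<k}) + card ({k..<k+l} - set w)"
        unfolding w(2) F_def by (rule card_Un_disjoint) auto
      also have "\<dots> = l + 1" using canon_card[OF w(1)] e1 c1 c2 by simp
      finally show "S \<in> {S. S \<subseteq> {..<k+l} \<and> card S = l + 1}" using sub by simp
    qed
  next
    show "{S. S \<subseteq> {..<k+l} \<and> card S = l + 1} \<subseteq> F ` {w. canon w}"
    proof
      fix S assume S: "S \<in> {S. S \<subseteq> {..<k+l} \<and> card S = l + 1}"
      define A where "A = S \<inter> {..<k}"
      define B where "B = {k..<k+l} - S"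
      have fS: "finite S" using S finite_subset by blast
      have cS: "card S = card A + card (S \<inter> {k..<k+l})"
      proof -
        have e: "S = A \<union> (S \<inter> {k..<k+l})" using S A_def by auto
        have "card (A \<union> (S \<inter> {k..<k+l})) = card A + card (S \<inter> {k..<k+l})"
          by (rule card_Un_disjoint) (use fS A_def in auto)
        then show ?thesis using e by simp
      qed
      have cB: "card B = l - card (S \<inter> {k..<k+l})"
        unfolding B_def using card_Diff_subset_Int[of "{k..<k+l}" S] by (simp add: Int_commute)
      have c2: "card (S \<inter> {k..<k+l}) \<le> l"
        using card_mono[of "{k..<k+l}" "S \<inter> {k..<k+l}"] by simp
      have "card A + card (S \<inter> {k..<k+l}) = l + 1" using cS S by simp
      then have "card A = card B + 1" using cB c2 by arith
      then obtain w where w: "canon w" "set w = A \<union> B"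
        using canon_exists[of B A] A_def B_def by auto
      have "F w = S" unfolding F_def w(2) A_def B_def using S by auto
      then show "S \<in> F ` {w. canon w}" using w(1) by blast
    qed
  qed
  have "card {w. canon w} = card {S. S \<subseteq> {..<k+l} \<and> card S = l + 1}"
    using inj img card_image by fastforce
  also have "\<dots> = (k + l) choose (l + 1)" using n_subsets[of "{..<k+l}" "l+1"] by simp
  finally show ?thesis .
qed

lemma finite_canon: "finite {w. canon w}"
proof -
  have "inj_on F {w. canon w}"
    by (rule inj_onI) (metis F_inv canon_unique mem_Collect_eq)
  moreover have "F ` {w. canon w} \<subseteq> Pow {..<k+l}" unfolding F_def by auto
  ultimately show ?thesis by (meson finite_Pow_iff finite_lessThan inj_on_finite)
qed

end



context cw
begin

definition WS :: "nat list set" where "WS = {w. canon w}"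
definition W :: "nat list list" where "W = sorted_list_of_set WS"
definition NN :: nat where "NN = length W - 1"

definition tbl :: "nat list \<Rightarrow> nat list \<Rightarrow> nat \<Rightarrow> (nat \<times> int) option" where
  "tbl u u' s = (if s < k then (if s = last u then Some (hd u', 1) else map_option (\<lambda>b. (b, -1)) (pl u s))
     else if s < k + l then map_option (\<lambda>a. (a, 1)) (pl (tl u') s) else None)"

definition dl :: "nat \<Rightarrow> nat tsym \<Rightarrow> (nat \<times> int) option" where
  "dl s c = (case c of LEnd \<Rightarrow> if s = 0 then Some (0, 1) else None | REnd \<Rightarrow> None
      | Sym i \<Rightarrow> if i < NN then tbl (W ! i) (W ! (i + 1)) s else None)"

definition AA :: tdfa where
  "AA = \<lparr>alph = {0..<NN}, states = {0..<k+l}, init = 0, trans = dl, final = {k - 1}\<rparr>"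

lemma finWS: "finite WS" using finite_canon WS_def by simp
lemma setW: "set W = WS" using finWS W_def by simp
lemma sortedW: "sorted_wrt (<) W" using W_def strict_sorted_list_of_set by simp
lemma lenW: "length W = (k + l) choose (l + 1)" using W_def WS_def card_canon finWS by simp

lemma canonW: "i < length W \<Longrightarrow> canon (W ! i)"
  using setW WS_def nth_mem by fastforce

lemma memW: "canon w \<Longrightarrow> \<exists>i<length W. W ! i = w"
  using setW WS_def by (metis in_set_conv_nth mem_Collect_eq)

lemma monoW: "i < length W \<Longrightarrow> j < length W \<Longrightarrow> W ! i \<le> W ! j \<Longrightarrow> i \<le> j"
  using sorted_wrt_nth_less[OF sortedW, of j i] by (metis leD not_le_imp_less)

lemma canon_min: "canon w \<Longrightarrow> [0] \<le> w"
  by (cases w) (auto simp: neq0_conv)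

lemma canon_max: "canon w \<Longrightarrow> w \<le> [k - 1]"
proof (cases w rule: canon.cases)
  case (2 a b c rest)
  assume "canon w"
  then have "a < c" "c < k" using 2 canon_hd[of "c # rest"] by auto
  then have "a < k - 1" by simp
  then show ?thesis using 2 by simp
qed (auto simp: le_less)

end

locale cw2 = cw + assumes k2: "2 \<le> k"
begin

lemma canon0: "canon [0]" using k2 by simp
lemma canonk: "canon [k - 1]" using k2 by simp

lemma lenW2: "length W = NN + 1" "1 \<le> NN"
proof -
  obtain i where i: "i < length W" "W ! i = [0]" using memW[OF canon0] by blast
  obtain j where j: "j < length W" "W ! j = [k - 1]" using memW[OF canonk] by blast
  have "i \<noteq> j" using i j k2 by auto
  then have "2 \<le> length W" using i j by linarith
  then show "length W = NN + 1" "1 \<le> NN" using NN_def by auto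
qed

lemma W0: "W ! 0 = [0]"
proof -
  obtain i where i: "i < length W" "W ! i = [0]" using memW[OF canon0] by blast
  have "W ! i \<le> W ! 0" using canon_min[OF canonW[of 0]] i lenW2 by simp
  then have "i \<le> 0" using monoW[of i 0] i lenW2 by simp
  then show ?thesis using i by simp
qed

lemma WN: "W ! NN = [k - 1]"
proof -
  obtain i where i: "i < length W" "W ! i = [k - 1]" using memW[OF canonk] by blast
  have "W ! NN \<le> W ! i" using canon_max[OF canonW[of NN]] i lenW2 by simp
  then have "NN \<le> i" using monoW[of NN i] i lenW2 by simp
  then have "i = NN" using i lenW2 by simp
  then show ?thesis using i by simp
qed

lemma tbl_dir: "canon u \<Longrightarrow> canon u' \<Longrightarrow> tbl u u' s = Some (r, d) \<Longrightarrow>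
   s < k + l \<and> r < k + l \<and> (d = 1 \<and> r < k \<or> d = -1 \<and> k \<le> r)"
  unfolding tbl_def
  using pl_L[of u s r] pl_R[of u' s r] canon_set[of u] canon_set[of u'] canon_hd[of u'] k2
  by (auto split: if_splits)

lemma dl_prop: "dl q c = Some (r, d) \<Longrightarrow> q < k + l \<and> r < k + l \<and> (d = 1 \<and> r < k \<or> d = -1 \<and> k \<le> r)
   \<and> (c = LEnd \<or> (\<exists>i<NN. c = Sym i))"
proof (cases c)
  case (Sym i)
  assume h: "dl q c = Some (r, d)"
  then have i: "i < NN" and t: "tbl (W ! i) (W ! (i + 1)) q = Some (r, d)" using Sym unfolding dl_def by (auto split: if_splits)
  have "canon (W ! i)" "canon (W ! (i+1))" using canonW lenW2 i by auto
  then show ?thesis using tbl_dir[OF _ _ t] Sym i by auto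
qed (use k2 in \<open>auto simp: dl_def split: if_splits\<close>)

lemma wfA: "wf_tdfa AA"
  unfolding wf_tdfa_def AA_def tape_syms_def using k2 dl_prop by fastforce

lemma ddA: "direction_determinate_wrt AA {0..<k} {k..<k+l}"
  unfolding direction_determinate_wrt_def AA_def using dl_prop by fastforce

end



context cw
begin
lemma canon_last: "canon w \<Longrightarrow> last w < k"
  by (induction w rule: canon.induct) auto
end

context cw2
begin

abbreviation ww :: "nat list" where "ww \<equiv> [0..<NN]"

lemma tape_ww: "1 \<le> x \<Longrightarrow> x \<le> NN \<Longrightarrow> tape ww x = Sym (x - 1)"
  unfolding tape_def by auto

lemma step_intro: "i \<le> Suc (length w) \<Longrightarrow> trans AA q (tape w i) = Some (r, d) \<Longrightarrow> 0 \<le> int i + d \<Longrightarrow>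
   int i + d \<le> int (Suc (length w)) \<Longrightarrow> j = nat (int i + d) \<Longrightarrow> step AA w (q, i) (r, j)"
  unfolding step_def by blast

lemma bounce:
  assumes i: "i < NN" and z: "canon z"
    and pz: "\<forall>a b. pl z a = Some b \<longrightarrow> pl (W ! i) a = Some b"
    and pt: "\<forall>a b. pl (tl z) a = Some b \<longrightarrow> pl (tl (W ! i)) a = Some b"
    and lz: "last z = last (W ! i)"
  shows "(step AA ww)\<^sup>*\<^sup>* (hd z, i + 1) (last (W ! i), i + 1)"
  using z pz pt lz
proof (induction z rule: canon.induct)
  case (1 a)
  then show ?case by simp
next
  case (2 a b c rest)
  let ?z = "a # b # c # rest"
  let ?u = "W ! i"
  have zc: "canon ?z" by fact
  then have cr: "canon (c # rest)" and ak: "a < k" and kb: "k \<le> b" and bl: "b < k + l" by auto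
  have d: "distinct ?z" using canon_distinct[OF zc] .
  have uc: "canon ?u" using canonW lenW2 i by simp
  have u'c: "canon (W ! (i + 1))" using canonW lenW2 i by simp
  have pa: "pl ?u a = Some b" using "2.prems"(2) by simp
  have na: "a \<noteq> last ?u"
  proof -
    have "last ?u = last (c # rest)" using "2.prems"(4) by simp
    moreover have "last (c # rest) \<in> set (c # rest)" by simp
    ultimately show ?thesis using d by auto
  qed
  have i1: "1 \<le> i"
  proof (rule ccontr)
    assume "\<not> 1 \<le> i"
    then have "i = 0" by simp
    then have "pl [0] a = Some b" using pa W0 by simp
    then show False by simp
  qed
  have s1: "step AA ww (a, i + 1) (b, i)"
  proof (rule step_intro[where d = "-1"])
    show "trans AA a (tape ww (i + 1)) = Some (b, -1)"
      using tape_ww[of "i + 1"] i ak na pa unfolding AA_def dl_def tbl_def by simp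
  qed (use i in auto)
  have pb: "pl (tl ?u) b = Some c" using "2.prems"(3) by simp
  have s2: "step AA ww (b, i) (c, i + 1)"
  proof (rule step_intro[where d = "1"])
    have e: "i - 1 + 1 = i" using i1 by simp
    have "i - 1 < NN" using i by simp
    then show "trans AA b (tape ww i) = Some (c, 1)"
      using tape_ww[of i] i i1 kb bl pb e unfolding AA_def dl_def tbl_def by simp
  qed (use i i1 in auto)
  have IH: "(step AA ww)\<^sup>*\<^sup>* (hd (c # rest), i + 1) (last ?u, i + 1)"
  proof (rule "2.IH"[OF cr])
    show "\<forall>x y. pl (c # rest) x = Some y \<longrightarrow> pl ?u x = Some y"
    proof (intro allI impI)
      fix x y assume h: "pl (c # rest) x = Some y"
      then have "x \<noteq> a" using pl_set d by fastforce
      then have "pl ?z x = Some y" using h by simp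
      then show "pl ?u x = Some y" using "2.prems"(2) by blast
    qed
    show "\<forall>x y. pl (tl (c # rest)) x = Some y \<longrightarrow> pl (tl ?u) x = Some y"
    proof (intro allI impI)
      fix x y assume h: "pl (tl (c # rest)) x = Some y"
      then have "x \<noteq> b" using pl_set d by fastforce
      then have "pl (tl ?z) x = Some y" using h by simp
      then show "pl (tl ?u) x = Some y" using "2.prems"(3) by blast
    qed
    show "last (c # rest) = last ?u" using "2.prems"(4) by simp
  qed
  show ?case using s1 s2 IH by (simp add: converse_rtranclp_into_rtranclp)
qed auto

lemma reach: "i \<le> NN \<Longrightarrow> (step AA ww)\<^sup>*\<^sup>* (0, 0) (hd (W ! i), i + 1)"
proof (induction i)
  case 0
  have "step AA ww (0, 0) (0, 1)"
    by (rule step_intro[where d = 1]) (auto simp: AA_def dl_def tape_def)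
  then show ?case using W0 by simp
next
  case (Suc i)
  have i: "i < NN" using Suc.prems by simp
  have uc: "canon (W ! i)" using canonW lenW2 i by simp
  have b: "(step AA ww)\<^sup>*\<^sup>* (hd (W ! i), i + 1) (last (W ! i), i + 1)"
    by (rule bounce[OF i uc]) auto
  have lk: "last (W ! i) < k" using canon_last[OF uc] .
  have s: "step AA ww (last (W ! i), i + 1) (hd (W ! (i + 1)), i + 2)"
  proof (rule step_intro[where d = 1])
    show "trans AA (last (W ! i)) (tape ww (i + 1)) = Some (hd (W ! (i + 1)), 1)"
      using tape_ww[of "i + 1"] i lk unfolding AA_def dl_def tbl_def by simp
  qed (use i in auto)
  show ?case using Suc.IH i b s by (simp add: rtranclp.rtrancl_into_rtrancl)
qed

lemma acc_ww: "accepts AA ww"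
proof -
  have "(step AA ww)\<^sup>*\<^sup>* (0, 0) (hd (W ! NN), NN + 1)" using reach by simp
  then show ?thesis unfolding accepts_def using WN by (auto simp: AA_def)
qed

end



context cw2
begin

lemma step_cases:
  assumes st: "step AA v (s, y) (r, y')" and vl: "v \<in> lists {0..<NN}"
  shows "(y = 0 \<and> s = 0 \<and> r = 0 \<and> y' = 1) \<or>
    (1 \<le> y \<and> y \<le> length v \<and> v ! (y - 1) < NN \<and>
     (\<exists>d. tbl (W ! (v ! (y - 1))) (W ! (v ! (y - 1) + 1)) s = Some (r, d) \<and>
        ((d = 1 \<and> y' = y + 1 \<and> r < k) \<or> (d = -1 \<and> y' = y - 1 \<and> k \<le> r))))"
proof -
  from st obtain d where t: "trans AA s (tape v y) = Some (r, d)" and yb: "y \<le> Suc (length v)"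
    and b1: "0 \<le> int y + d" and b2: "int y + d \<le> int (Suc (length v))" and y': "y' = nat (int y + d)"
    unfolding step_def by auto
  show ?thesis
  proof (cases "y = 0")
    case True
    then show ?thesis using t y' by (auto simp: AA_def dl_def tape_def split: if_splits)
  next
    case False
    show ?thesis
    proof (cases "y = Suc (length v)")
      case True
      then show ?thesis using t False by (simp add: AA_def dl_def tape_def)
    next
      case False2: False
      have yl: "1 \<le> y" "y \<le> length v" using False False2 yb by auto
      have tv: "tape v y = Sym (v ! (y - 1))" using False False2 unfolding tape_def by simp
      have vn: "v ! (y - 1) < NN" using vl yl by (auto simp: lists_def)
      have tb: "tbl (W ! (v ! (y - 1))) (W ! (v ! (y - 1) + 1)) s = Some (r, d)"
        using t tv vn by (simp add: AA_def dl_def)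
      have "canon (W ! (v ! (y - 1)))" "canon (W ! (v ! (y - 1) + 1))" using canonW lenW2 vn by auto
      then have "d = 1 \<and> r < k \<or> d = -1 \<and> k \<le> r" using tbl_dir[OF _ _ tb] by auto
      then show ?thesis using yl vn tb y' by auto
    qed
  qed
qed

lemma card_filter_distinct: "distinct L \<Longrightarrow> card {x \<in> set L. p x} = length (filter p L)"
  by (metis distinct_card distinct_filter set_filter)

lemma step_det: "step A w c c1 \<Longrightarrow> step A w c c2 \<Longrightarrow> c1 = c2"
  unfolding step_def by auto

lemma lower:
  assumes acc: "accepts AA v"
  shows "NN \<le> length v"
proof -
  define m where "m = length v"
  have vl: "v \<in> lists {0..<NN}" using acc by (simp add: accepts_def AA_def)
  have run: "(step AA v)\<^sup>*\<^sup>* (0, 0) (k - 1, Suc m)" using acc by (simp add: accepts_def AA_def m_def)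
  define S where "S = step AA v"
  define V where "V = {c. S\<^sup>*\<^sup>* (0, 0) c \<and> S\<^sup>*\<^sup>* c (k - 1, Suc m)}"
  have nofin: "\<not> S (s, Suc m) c" for s c
    using step_cases[of v s "Suc m" "fst c" "snd c"] vl unfolding S_def m_def by (cases c) auto
  have V_succ: "\<exists>c'. S c c' \<and> c' \<in> V" if cV: "c \<in> V" and cf: "c \<noteq> (k - 1, Suc m)" for c
  proof -
    from cV have "S\<^sup>*\<^sup>* c (k - 1, Suc m)" unfolding V_def by simp
    then obtain c' where "S c c'" "S\<^sup>*\<^sup>* c' (k - 1, Suc m)" using cf by (metis converse_rtranclpE)
    moreover have "S\<^sup>*\<^sup>* (0, 0) c'" using cV calculation(1) unfolding V_def by auto
    ultimately show ?thesis unfolding V_def by blast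
  qed
  have V_pred: "\<exists>c0\<in>V. S c0 c" if cV: "c \<in> V" and c0: "c \<noteq> (0, 0)" for c
  proof -
    from cV have "S\<^sup>*\<^sup>* (0, 0) c" unfolding V_def by simp
    then obtain c0 where "S\<^sup>*\<^sup>* (0, 0) c0" "S c0 c" using c0 by (metis rtranclp.cases)
    moreover have "S\<^sup>*\<^sup>* c (k - 1, Suc m)" using cV unfolding V_def by simp
    moreover have "S\<^sup>*\<^sup>* c0 (k - 1, Suc m)" using calculation by (meson converse_rtranclp_into_rtranclp)
    ultimately show ?thesis unfolding V_def by blast
  qed
  have V_next: "c' \<in> V" if cV: "c \<in> V" and sc: "S c c'" for c c'
  proof -
    have "c \<noteq> (k - 1, Suc m)" using nofin sc by (metis surj_pair)
    then obtain c'' where "S c c''" "c'' \<in> V" using V_succ cV by blast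
    then show ?thesis using step_det[of AA v c c' c''] sc unfolding S_def by simp
  qed
  have V0: "(0, 0) \<in> V" and Vf: "(k - 1, Suc m) \<in> V" using run unfolding V_def S_def by auto
  have SC: "S (s, y) (r, y') \<Longrightarrow> (y = 0 \<and> s = 0 \<and> r = 0 \<and> y' = 1) \<or>
    (1 \<le> y \<and> y \<le> m \<and> v ! (y - 1) < NN \<and>
     (\<exists>d. tbl (W ! (v ! (y - 1))) (W ! (v ! (y - 1) + 1)) s = Some (r, d) \<and>
        ((d = 1 \<and> y' = y + 1 \<and> r < k) \<or> (d = -1 \<and> y' = y - 1 \<and> k \<le> r))))" for s y r y'
    using step_cases[OF _ vl] unfolding S_def m_def by blast
  define Pb where "Pb b = {s. s < k \<and> (s, Suc b) \<in> V}" for b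
  define Qb where "Qb b = {s. k \<le> s \<and> (s, b) \<in> V}" for b
  define inv where "inv b \<longleftrightarrow> card (Pb b) = card (Qb b) + 1 \<and> (\<exists>i\<le>b. i < length W \<and> set (W ! i) = Pb b \<union> Qb b)" for b
  have Pk: "Pb b \<subseteq> {..<k}" for b unfolding Pb_def by auto
  have Qk: "Qb b \<subseteq> {k..}" for b unfolding Qb_def by auto
  have inv0: "inv 0"
  proof -
    have Q0: "Qb 0 = {}"
    proof (rule ccontr)
      assume "Qb 0 \<noteq> {}"
      then obtain s where s: "k \<le> s" "(s, 0) \<in> V" unfolding Qb_def by auto
      obtain c' where "S (s, 0) c'" using V_succ[OF s(2)] by auto
      then show False using SC[of s 0 "fst c'" "snd c'"] s(1) k2 by simp
    qed
    have st: "step AA v (0, 0) (0, 1)"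
      by (rule step_intro[where d = 1]) (auto simp: AA_def dl_def tape_def)
    have P0: "Pb 0 = {0}"
    proof
      show "{0} \<subseteq> Pb 0" using V_next[OF V0] st k2 unfolding S_def Pb_def by auto
      show "Pb 0 \<subseteq> {0}"
      proof
        fix r assume r: "r \<in> Pb 0"
        then have rV: "(r, 1) \<in> V" and rk: "r < k" unfolding Pb_def by auto
        obtain c0 where c0: "c0 \<in> V" "S c0 (r, 1)" using V_pred[OF rV] by auto
        then show "r \<in> {0}" using SC[of "fst c0" "snd c0" r 1] rk by auto
      qed
    qed
    show ?thesis unfolding inv_def using P0 Q0 W0 lenW2 by (intro conjI exI[of _ 0]) auto
  qed
  have invS: "inv (Suc b)" if bm: "b < m" and ib: "inv b" for b
  proof -
    define c where "c = v ! b"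
    have cN: "c < NN" using vl bm unfolding c_def m_def by (auto simp: lists_def)
    define u where "u = W ! c"
    define u' where "u' = W ! (c + 1)"
    have uc: "canon u" and u'c: "canon u'" using canonW lenW2 cN unfolding u_def u'_def by auto
    define P where "P = Pb b"
    define Q where "Q = Qb b"
    define Q' where "Q' = Qb (Suc b)"
    obtain i where i: "i \<le> b" "i < length W" "set (W ! i) = P \<union> Q" and cPQ: "card P = card Q + 1"
      using ib unfolding inv_def P_def Q_def by auto
    have CS: "\<exists>r. (tbl u u' s = Some (r, 1) \<and> r < k \<and> (r, Suc (Suc b)) \<in> V) \<or>
                  (tbl u u' s = Some (r, -1) \<and> k \<le> r \<and> (r, b) \<in> V)" if sV: "(s, Suc b) \<in> V" for s
    proof -
      have "(s, Suc b) \<noteq> (k - 1, Suc m)" using bm by simp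
      then obtain c' where c': "S (s, Suc b) c'" "c' \<in> V" using V_succ[OF sV] by auto
      obtain r y' where ry: "c' = (r, y')" by (cases c')
      show ?thesis using SC[of s "Suc b" r y'] c' ry unfolding u_def u'_def c_def by auto
    qed
    have F1: "P \<subseteq> {a \<in> set u. a < k}"
    proof
      fix s assume "s \<in> P"
      then have sV: "(s, Suc b) \<in> V" and sk: "s < k" unfolding P_def Pb_def by auto
      obtain r d where t: "tbl u u' s = Some (r, d)" using CS[OF sV] by auto
      have "s \<in> set u"
      proof (cases "s = last u")
        case True then show ?thesis using uc by (cases u) auto
      next
        case False
        then obtain bb where "pl u s = Some bb" using t sk unfolding tbl_def by (auto split: if_splits)
        then show ?thesis using pl_L[OF uc] by blast
      qed
      then show "s \<in> {a \<in> set u. a < k}" using sk by simp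
    qed
    have F2: "Q = {bb. \<exists>a\<in>P. pl u a = Some bb}"
    proof
      show "{bb. \<exists>a\<in>P. pl u a = Some bb} \<subseteq> Q"
      proof
        fix bb assume "bb \<in> {bb. \<exists>a\<in>P. pl u a = Some bb}"
        then obtain a where a: "a \<in> P" "pl u a = Some bb" by auto
        have aV: "(a, Suc b) \<in> V" using a unfolding P_def Pb_def by auto
        have al: "a \<noteq> last u" "a < k" using pl_L[OF uc a(2)] by auto
        have t: "tbl u u' a = Some (bb, -1)" using a(2) al unfolding tbl_def by simp
        then show "bb \<in> Q" using CS[OF aV] unfolding Q_def Qb_def by auto
      qed
      show "Q \<subseteq> {bb. \<exists>a\<in>P. pl u a = Some bb}"
      proof
        fix bb assume "bb \<in> Q"
        then have bV: "(bb, b) \<in> V" and kb: "k \<le> bb" unfolding Q_def Qb_def by auto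
        have "(bb, b) \<noteq> (0, 0)" using kb k2 by auto
        then obtain c0 where c0: "c0 \<in> V" "S c0 (bb, b)" using V_pred[OF bV] by auto
        obtain s y where sy: "c0 = (s, y)" by (cases c0)
        have "y = Suc b \<and> tbl u u' s = Some (bb, -1)"
          using SC[of s y bb b] c0 sy kb k2 unfolding u_def u'_def c_def by auto
        then have y: "y = Suc b" and t: "tbl u u' s = Some (bb, -1)" by auto
        have sk: "s < k" "s \<noteq> last u" "pl u s = Some bb" using t unfolding tbl_def by (auto split: if_splits)
        have "s \<in> P" using c0 sy y sk unfolding P_def Pb_def by auto
        then show "bb \<in> {bb. \<exists>a\<in>P. pl u a = Some bb}" using sk by auto
      qed
    qed
    have F3: "Q' \<subseteq> {bb \<in> set u'. k \<le> bb}"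
    proof
      fix s assume "s \<in> Q'"
      then have sV: "(s, Suc b) \<in> V" and sk: "k \<le> s" unfolding Q'_def Qb_def by auto
      obtain r d where t: "tbl u u' s = Some (r, d)" using CS[OF sV] by auto
      then obtain a where "pl (tl u') s = Some a" using sk unfolding tbl_def by (auto split: if_splits)
      then show "s \<in> {bb \<in> set u'. k \<le> bb}" using pl_R[OF u'c] by blast
    qed
    have setlf: "set (lf P u) = P \<union> Q" using lf_set[OF uc, of P] F1 F2 by auto
    have dlf: "distinct (lf P u)" using lf_distinct canon_distinct[OF uc] by blast
    have e1: "{x \<in> set (lf P u). x < k} = P" using setlf Pk[of b] Qk[of b] unfolding P_def Q_def by auto
    have e2: "{x \<in> set (lf P u). \<not> x < k} = Q" using setlf Pk[of b] Qk[of b] unfolding P_def Q_def by auto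
    have cnt: "card P = card Q + (if last u \<in> P then 1 else 0)"
    proof -
      have "length (filter (\<lambda>x. x < k) (lf P u)) = length (filter (\<lambda>x. \<not> x < k) (lf P u)) + (if last u \<in> P then 1 else 0)"
        using lf_count[OF uc, of P] .
      moreover have "length (filter (\<lambda>x. x < k) (lf P u)) = card P"
        using card_filter_distinct[OF dlf, of "\<lambda>x. x < k"] e1 by simp
      moreover have "length (filter (\<lambda>x. \<not> x < k) (lf P u)) = card Q"
        using card_filter_distinct[OF dlf, of "\<lambda>x. \<not> x < k"] e2 by simp
      ultimately show ?thesis by simp
    qed
    have lP: "last u \<in> P"
    proof (rule ccontr)
      assume "last u \<notin> P"
      then have "card P = card Q" using cnt by simp
      then show False using cPQ by simp
    qed
    have lfc: "canon (lf P u)" "u \<le> lf P u" using lf_canon[OF uc lP] by auto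
    have "lf P u = W ! i" using canon_unique[OF lfc(1) canonW[OF i(2)]] setlf i(3) by simp
    then have "W ! c \<le> W ! i" using lfc(2) u_def by simp
    then have ci: "c \<le> i" using monoW[of c i] cN lenW2 i(2) by simp
    have F4: "Pb (Suc b) = {hd u'} \<union> {a. \<exists>bb\<in>Q'. pl (tl u') bb = Some a}"
    proof
      show "{hd u'} \<union> {a. \<exists>bb\<in>Q'. pl (tl u') bb = Some a} \<subseteq> Pb (Suc b)"
      proof
        fix a assume "a \<in> {hd u'} \<union> {a. \<exists>bb\<in>Q'. pl (tl u') bb = Some a}"
        then consider "a = hd u'" | bb where "bb \<in> Q'" "pl (tl u') bb = Some a" by auto
        then show "a \<in> Pb (Suc b)"
        proof cases
          case 1
          have lV: "(last u, Suc b) \<in> V" and lk: "last u < k" using lP unfolding P_def Pb_def by auto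
          have "tbl u u' (last u) = Some (hd u', 1)" using lk unfolding tbl_def by simp
          then show ?thesis using CS[OF lV] 1 unfolding Pb_def by auto
        next
          case 2
          have bV: "(bb, Suc b) \<in> V" and kb: "k \<le> bb" using 2(1) unfolding Q'_def Qb_def by auto
          have "bb < k + l" using pl_R[OF u'c 2(2)] canon_set[OF u'c] by auto
          then have "tbl u u' bb = Some (a, 1)" using kb 2(2) unfolding tbl_def by simp
          then show ?thesis using CS[OF bV] unfolding Pb_def by auto
        qed
      qed
      show "Pb (Suc b) \<subseteq> {hd u'} \<union> {a. \<exists>bb\<in>Q'. pl (tl u') bb = Some a}"
      proof
        fix r assume "r \<in> Pb (Suc b)"
        then have rV: "(r, Suc (Suc b)) \<in> V" and rk: "r < k" unfolding Pb_def by auto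
        obtain c0 where c0: "c0 \<in> V" "S c0 (r, Suc (Suc b))" using V_pred[OF rV] by auto
        obtain s y where sy: "c0 = (s, y)" by (cases c0)
        have "y = Suc b \<and> tbl u u' s = Some (r, 1)"
          using SC[of s y r "Suc (Suc b)"] c0 sy rk unfolding u_def u'_def c_def by auto
        then have y: "y = Suc b" and t: "tbl u u' s = Some (r, 1)" by auto
        show "r \<in> {hd u'} \<union> {a. \<exists>bb\<in>Q'. pl (tl u') bb = Some a}"
        proof (cases "s < k")
          case True
          then have "s = last u \<and> r = hd u'" using t unfolding tbl_def by (auto split: if_splits)
          then show ?thesis by simp
        next
          case False
          then have "pl (tl u') s = Some r" using t unfolding tbl_def by (auto split: if_splits)
          moreover have "s \<in> Q'" using False c0 sy y unfolding Q'_def Qb_def by auto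
          ultimately show ?thesis by auto
        qed
      qed
    qed
    define R where "R = hd u' # rf Q' (tl u')"
    have setR: "set R = Pb (Suc b) \<union> Q'" using rf_set[OF u'c, of Q'] F3 F4 unfolding R_def by auto
    have Rc: "canon R" "R \<le> u'" using rf_canon[OF u'c, of Q'] unfolding R_def by auto
    obtain j where j: "j < length W" "W ! j = R" using memW[OF Rc(1)] by blast
    have "j \<le> c + 1" using monoW[of j "c + 1"] j Rc(2) u'_def cN lenW2 by simp
    then have jb: "j \<le> Suc b" using ci i(1) by simp
    have eR1: "set R \<inter> {..<k} = Pb (Suc b)" using setR Pk[of "Suc b"] Qk[of "Suc b"] unfolding Q'_def by auto
    have eR2: "set R \<inter> {k..} = Q'" using setR Pk[of "Suc b"] Qk[of "Suc b"] unfolding Q'_def by auto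
    have "card (Pb (Suc b)) = card Q' + 1" using canon_card[OF Rc(1)] eR1 eR2 by simp
    then show ?thesis unfolding inv_def Q'_def using j jb setR Q'_def by auto
  qed
  have allinv: "b \<le> m \<Longrightarrow> inv b" for b
  proof (induction b)
    case 0 then show ?case using inv0 by simp
  next
    case (Suc b) then show ?case using invS by simp
  qed
  have Pm: "Pb m = {k - 1}"
  proof
    show "{k - 1} \<subseteq> Pb m" using Vf k2 unfolding Pb_def by auto
    show "Pb m \<subseteq> {k - 1}"
    proof
      fix r assume "r \<in> Pb m"
      then have rV: "(r, Suc m) \<in> V" unfolding Pb_def by auto
      show "r \<in> {k - 1}"
      proof (rule ccontr)
        assume "r \<notin> {k - 1}"
        then have "(r, Suc m) \<noteq> (k - 1, Suc m)" by simp
        then obtain c' where "S (r, Suc m) c'" using V_succ[OF rV] by auto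
        then show False using nofin by auto
      qed
    qed
  qed
  have Qm: "Qb m = {}"
  proof (rule ccontr)
    assume "Qb m \<noteq> {}"
    then obtain s where s: "k \<le> s" "(s, m) \<in> V" unfolding Qb_def by auto
    have "(s, m) \<noteq> (0, 0)" using s k2 by auto
    then obtain c0 where c0: "c0 \<in> V" "S c0 (s, m)" using V_pred[OF s(2)] by auto
    then show False using SC[of "fst c0" "snd c0" s m] s(1) k2 by auto
  qed
  obtain i where i: "i \<le> m" "i < length W" "set (W ! i) = {k - 1}"
    using allinv[of m] Pm Qm unfolding inv_def by auto
  have "W ! i = [k - 1]" using canon_unique[OF canonW[OF i(2)] canonk] i(3) by simp
  then have "W ! i = W ! NN" using WN by simp
  then have "i = NN" using nth_eq_iff_index_eq[of W i NN] sortedW i(2) lenW2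
    by (simp add: strict_sorted_iff)
  then show ?thesis using i(1) m_def by simp
qed

end

theorem theorem3:
  fixes k l :: nat
  assumes "k \<ge> 2"
  shows "\<exists>A Qp Qm. wf_tdfa A \<and> direction_determinate_wrt A Qp Qm
           \<and> card Qp = k \<and> card Qm = l
           \<and> (\<exists>w. accepts A w)
           \<and> (\<exists>w. accepts A w \<and> length w = ((k + l) choose (l + 1)) - 1
                \<and> (\<forall>v. accepts A v \<longrightarrow> length w \<le> length v))"
proof -
  interpret cw2 k l using assms by unfold_locales
  have len: "length ww = ((k + l) choose (l + 1)) - 1" using lenW NN_def by simp
  have "wf_tdfa AA \<and> direction_determinate_wrt AA {0..<k} {k..<k+l}
           \<and> card {0..<k} = k \<and> card {k..<k+l} = l
           \<and> (\<exists>w. accepts AA w)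
           \<and> (\<exists>w. accepts AA w \<and> length w = ((k + l) choose (l + 1)) - 1
                \<and> (\<forall>v. accepts AA v \<longrightarrow> length w \<le> length v))"
    using wfA ddA acc_ww len lower by auto
  then show ?thesis by blast
qed

end
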